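(* Let $H=(V,E)$ be a downward-closed hypergraph (for every $e\in E$ and every $e'\subseteq e$ with $|e'|>1$, $e'\in E$), and let $F$ be a facet of $\mathrm{MP}^H$. Define $V_1^F=\{I\in V: \forall z\in\mathrm{MP}^H,\ z_I=1 \text{ implies } z\in F\}$, and for $U\subseteq V$ define $E_U=\{e\in L(V)\cup E\cup\{\varnothing\}: e\subseteq V\setminus U,\ e\cup U\in L(V)\cup E\}$ and $F_U=\{z\in F: z_I=0\ \forall I\in U\}$. If $U\subseteq V\setminus V_1^F$ is nonempty, then either $E_U$ is empty, or the projection $\operatorname{proj}_{E_U\setminus\{\varnothing\}}F_U$ is full-dimensional in $\mathbb{R}^{E_U\setminus\{\varnothing\}}$.
   Context: A hypergraph $H=(V,E)$ here has a finite vertex set $V$ and hyperedge set $E$ consisting of subsets $e\subseteq V$ with $|e|\ge 2$. Write $L(V)=\{\{I\}: I\in V\}$. The multilinear set is $\mathcal{S}^H=\{z\in\{0,1\}^{L(V)\cup E}: z_e=\prod_{I\in e}z_I\ \forall e\in E\}$, where $z_I=z_{\{I\}}$, and the multilinear polytope is $\mathrm{MP}^H=\operatorname{conv}\mathcal{S}^H$. $\operatorname{proj}_{S'}$ extracts the coordinates indexed by $S'$. *)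

theory Defs
  imports "HOL-Analysis.Analysis"
begin

text \<open>Only the coordinates in
  L(V) \<union> E are meaningful; all other coordinates are fixed to 0.\<close>

definition hypergraph :: "'v set \<Rightarrow> 'v set set \<Rightarrow> bool" where
  "hypergraph V E \<longleftrightarrow> finite V \<and> (\<forall>e\<in>E. e \<subseteq> V \<and> card e \<ge> 2)"

definition downward_closed :: "'v set set \<Rightarrow> bool" where
  "downward_closed E \<longleftrightarrow> (\<forall>e\<in>E. \<forall>e'. e' \<subseteq> e \<and> card e' > 1 \<longrightarrow> e' \<in> E)"

definition Lset :: "'v set \<Rightarrow> 'v set set" where
  "Lset V = {{I} | I. I \<in> V}"

definition multilinear_set :: "'v::finite set \<Rightarrow> 'v set set \<Rightarrow> (real ^ ('v set)) set" where
  "multilinear_set V E = {z. (\<forall>e \<in> Lset V \<union> E. z $ e \<in> {0,1})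
       \<and> (\<forall>e\<in>E. z $ e = (\<Prod>I\<in>e. z $ {I}))
       \<and> (\<forall>e. e \<notin> Lset V \<union> E \<longrightarrow> z $ e = 0)}"

definition multilinear_polytope :: "'v::finite set \<Rightarrow> 'v set set \<Rightarrow> (real ^ ('v set)) set" where
  "multilinear_polytope V E = convex hull (multilinear_set V E)"

definition V1F :: "'v::finite set \<Rightarrow> 'v set set \<Rightarrow> (real ^ ('v set)) set \<Rightarrow> 'v set" where
  "V1F V E F = {I \<in> V. \<forall>z \<in> multilinear_polytope V E. z $ {I} = 1 \<longrightarrow> z \<in> F}"

definition E_U :: "'v set \<Rightarrow> 'v set set \<Rightarrow> 'v set \<Rightarrow> 'v set set" where
  "E_U V E U = {e. e \<in> Lset V \<union> E \<union> {{}} \<and> e \<subseteq> V - U \<and> e \<union> U \<in> Lset V \<union> E}"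

definition F_U :: "(real ^ ('v::finite set)) set \<Rightarrow> 'v set \<Rightarrow> (real ^ ('v set)) set" where
  "F_U F U = {z \<in> F. \<forall>I\<in>U. z $ {I} = 0}"

text \<open>Projection onto the coordinates in S (other coordinates set to 0);
  a set is full-dimensional in R^S iff its projection has affine dimension card S.\<close>
definition proj :: "'i::finite set \<Rightarrow> real ^ 'i \<Rightarrow> real ^ 'i" where
  "proj S z = (\<chi> e. if e \<in> S then z $ e else 0)"

end

theory Submission
  imports Defs
begin

definition vx :: "'v set \<Rightarrow> 'v set set \<Rightarrow> 'v set \<Rightarrow> real ^ ('v::finite set)" where
  "vx V E X = (\<chi> S. if S \<in> Lset V \<union> E \<and> S \<subseteq> X then 1 else 0)"

definition mon :: "real ^ ('v::finite set) \<Rightarrow> 'v set \<Rightarrow> real" where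
  "mon z S = (if S = {} then 1 else z $ S)"

lemma alt_sum: "finite A \<Longrightarrow> (\<Sum>T\<in>Pow A. (-1::real)^card T) = (if A = {} then 1 else 0)"
proof (induction A rule: finite_induct)
  case empty
  then show ?case by simp
next
  case (insert a A)
  let ?f = "\<lambda>T. (-1::real)^card T"
  have disj: "Pow A \<inter> insert a ` Pow A = {}" using insert by auto
  have inj: "inj_on (insert a) (Pow A)" using insert unfolding inj_on_def by (meson PowD insert_ident subsetD)
  have "sum ?f (Pow (insert a A)) = sum ?f (Pow A) + sum ?f (insert a ` Pow A)"
    unfolding Pow_insert using insert disj by (simp add: sum.union_disjoint)
  also have "sum ?f (insert a ` Pow A) = sum (?f \<circ> insert a) (Pow A)"
    using inj by (simp add: sum.reindex)
  also have "\<dots> = sum (\<lambda>T. - ?f T) (Pow A)"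
  proof (rule sum.cong)
    fix T assume "T \<in> Pow A"
    then have "finite T" "a \<notin> T" using insert finite_subset by auto
    then show "(?f \<circ> insert a) T = - ?f T" by simp
  qed simp
  finally show ?case by (simp add: sum_negf)
qed

lemma in_K:
  assumes "hypergraph V E" "downward_closed E" "S \<in> Lset V \<union> E" "T \<subseteq> S" "T \<noteq> {}"
  shows "T \<in> Lset V \<union> E"
proof -
  have fS: "finite S" and SV: "S \<subseteq> V"
    using assms(1,3) unfolding hypergraph_def Lset_def by (auto intro: finite_subset)
  have fT: "finite T" using fS assms(4) finite_subset by auto
  show ?thesis
  proof (cases "card T = 1")
    case True
    then obtain I where "T = {I}" using card_1_singletonE by blast
    then show ?thesis using SV assms(4) unfolding Lset_def by auto
  next
    case False
    then have c: "card T > 1" using fT assms(5) by (simp add: card_gt_0_iff nat_neq_iff)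
    have "card S > 1" using card_mono[OF fS assms(4)] c by simp
    then have "S \<in> E" using assms(3) unfolding Lset_def by auto
    then show ?thesis using assms(2,4) c unfolding downward_closed_def by auto
  qed
qed

lemma vx_coord_single: "I \<in> V \<Longrightarrow> vx V E X $ {I} = (if I \<in> X then 1 else 0)"
  unfolding vx_def Lset_def by auto

lemma vx_in:
  assumes "hypergraph V E"
  shows "vx V E X \<in> multilinear_set V E"
proof -
  have "\<forall>e\<in>E. vx V E X $ e = (\<Prod>I\<in>e. vx V E X $ {I})"
  proof
    fix e assume e: "e \<in> E"
    then have eV: "e \<subseteq> V" and fe: "finite e" using assms unfolding hypergraph_def
      by (auto intro: finite_subset)
    have "(\<Prod>I\<in>e. vx V E X $ {I}) = (\<Prod>I\<in>e. (if I \<in> X then 1 else 0))"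
      using eV by (intro prod.cong) (auto simp: vx_coord_single)
    also have "\<dots> = (if e \<subseteq> X then 1 else 0)"
      using fe by (cases "e \<subseteq> X") (auto intro!: prod.neutral simp: prod_zero_iff)
    finally show "vx V E X $ e = (\<Prod>I\<in>e. vx V E X $ {I})" using e unfolding vx_def by simp
  qed
  then show ?thesis unfolding multilinear_set_def vx_def by auto
qed

lemma ml_vx:
  assumes "hypergraph V E" "z \<in> multilinear_set V E"
  shows "\<exists>X\<subseteq>V. z = vx V E X"
proof -
  define X where "X = {I\<in>V. z $ {I} = 1}"
  have z01: "\<And>e. e \<in> Lset V \<union> E \<Longrightarrow> z $ e \<in> {0,1}"
    and zp: "\<And>e. e \<in> E \<Longrightarrow> z $ e = (\<Prod>I\<in>e. z $ {I})"
    and z0: "\<And>e. e \<notin> Lset V \<union> E \<Longrightarrow> z $ e = 0"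
    using assms(2) unfolding multilinear_set_def by auto
  have sing: "\<And>I. I \<in> V \<Longrightarrow> z $ {I} = (if I \<in> X then 1 else 0)"
  proof -
    fix I assume "I \<in> V"
    then have "{I} \<in> Lset V" unfolding Lset_def by auto
    then show "z $ {I} = (if I \<in> X then 1 else 0)" using z01[of "{I}"] \<open>I \<in> V\<close>
      unfolding X_def by auto
  qed
  have "z = vx V E X"
  proof (subst vec_eq_iff, intro allI)
    fix S
    show "z $ S = vx V E X $ S"
    proof (cases "S \<in> Lset V")
      case True
      then obtain I where I: "S = {I}" "I \<in> V" unfolding Lset_def by auto
      then show ?thesis using sing[OF I(2)] vx_coord_single[OF I(2), of E X] by simp
    next
      case nL: False
      show ?thesis
      proof (cases "S \<in> E")
        case True
        then have SV: "S \<subseteq> V" and fS: "finite S" using assms(1) unfolding hypergraph_def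
          by (auto intro: finite_subset)
        have "z $ S = (\<Prod>I\<in>S. z $ {I})" using zp[OF True] .
        also have "\<dots> = (\<Prod>I\<in>S. (if I \<in> X then 1 else 0))"
          by (rule prod.cong) (use SV sing in auto)
        also have "\<dots> = (if S \<subseteq> X then 1 else 0)"
          using fS by (cases "S \<subseteq> X") (auto intro!: prod.neutral simp: prod_zero_iff)
        finally show ?thesis using True unfolding vx_def by simp
      next
        case False
        then show ?thesis using z0 nL unfolding vx_def by simp
      qed
    qed
  qed
  moreover have "X \<subseteq> V" unfolding X_def by auto
  ultimately show ?thesis by blast
qed

lemma vx_mon: "S \<in> Lset V \<union> E \<union> {{}} \<Longrightarrow> mon (vx V E X) S = (if S \<subseteq> X then 1 else 0)"
  unfolding mon_def vx_def by auto

lemma mon_aff: "u + v = 1 \<Longrightarrow> mon (u *\<^sub>R x + v *\<^sub>R y) S = u * mon x S + v * mon y S"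
  unfolding mon_def by auto

theorem lemma6p1:
  fixes V :: "'v::finite set" and E :: "'v set set"
    and F :: "(real ^ ('v set)) set" and U :: "'v set"
  assumes "hypergraph V E"
    and "downward_closed E"
    and "F facet_of multilinear_polytope V E"
    and "U \<subseteq> V - V1F V E F"
    and "U \<noteq> {}"
  shows "E_U V E U = {} \<or>
         aff_dim (proj (E_U V E U - {{}}) ` F_U F U) = int (card (E_U V E U - {{}}))"
proof (rule ccontr)
  assume neg: "\<not> ?thesis"
  define K where "K = Lset V \<union> E"
  define EU where "EU = E_U V E U"
  define EU' where "EU' = EU - {{}}"
  define M where "M = multilinear_set V E"
  define P where "P = multilinear_polytope V E"
  have PM: "P = convex hull M" unfolding P_def M_def multilinear_polytope_def by simp
  have hV: "finite V" using assms(1) unfolding hypergraph_def by simp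
  have EUne: "EU \<noteq> {}" and adne: "aff_dim (proj EU' ` F_U F U) \<noteq> int (card EU')"
    using neg unfolding EU_def EU'_def by auto
  have UV: "U \<subseteq> V" using assms(4) by auto
  have UK: "U \<in> K"
  proof -
    obtain e where "e \<in> EU" using EUne by blast
    then have "e \<union> U \<in> K" unfolding EU_def E_U_def K_def by auto
    then show ?thesis using in_K[OF assms(1,2), of "e \<union> U" U] assms(5) unfolding K_def by auto
  qed
  have EU'K: "\<And>e T. e \<in> EU' \<Longrightarrow> T \<subseteq> U \<Longrightarrow> e \<union> T \<in> K"
  proof -
    fix e T assume "e \<in> EU'" "T \<subseteq> U"
    then have "e \<union> U \<in> K" "e \<noteq> {}" "e \<union> T \<subseteq> e \<union> U"
      unfolding EU'_def EU_def E_U_def K_def by auto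
    then show "e \<union> T \<in> K" using in_K[OF assms(1,2), of "e \<union> U" "e \<union> T"] unfolding K_def by auto
  qed
  have EU'sub: "\<And>e. e \<in> EU' \<Longrightarrow> e \<subseteq> V - U \<and> e \<noteq> {}"
    unfolding EU'_def EU_def E_U_def by auto
  have TK: "\<And>T. T \<subseteq> U \<Longrightarrow> T \<in> K \<union> {{}}"
    using in_K[OF assms(1,2), of U] UK unfolding K_def by auto
  obtain c d where cS: "\<And>i. i \<notin> EU' \<Longrightarrow> c $ i = 0" and cd: "c \<noteq> 0 \<or> d \<noteq> 0"
    and rel: "\<And>z. z \<in> F_U F U \<Longrightarrow> c \<bullet> z = d"
  proof (cases "F_U F U = {}")
    case True
    show ?thesis by (rule that[of 0 1]) (use True in auto)
  next
    case False
    define Q where "Q = proj EU' ` F_U F U"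
    obtain q0 where q0: "q0 \<in> Q" using False unfolding Q_def by auto
    define Sp where "Sp = {x::real^('v set). \<forall>i. i \<notin> EU' \<longrightarrow> x$i = 0}"
    have subSp: "subspace Sp" unfolding Sp_def subspace_def by auto
    have QSp: "Q \<subseteq> Sp" unfolding Q_def Sp_def proj_def by auto
    define D where "D = (+) (- q0) ` Q"
    have DSp: "D \<subseteq> Sp" using QSp q0 subSp unfolding D_def
      by (auto intro!: subspace_diff)
    have spSp: "span Sp = Sp" using subSp by (simp add: span_eq_iff)
    have adQ: "aff_dim Q = int (dim D)" unfolding D_def
      by (rule aff_dim_eq_dim) (rule hull_inc[OF q0])
    have vdSp: "vec.dim Sp = card EU'" unfolding Sp_def by (rule dim_substandard_cart)
    have dSp: "dim Sp = card EU'" using vdSp by (simp add: dim_vec_eq)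
    have "span D \<subseteq> span Sp" using DSp by (simp add: span_mono)
    moreover have "span D \<noteq> span Sp"
    proof
      assume "span D = span Sp"
      then have "dim D = dim Sp" by (metis dim_span)
      then show False using adne adQ dSp unfolding Q_def by simp
    qed
    ultimately have "span D \<subset> span Sp" by blast
    then obtain c where c0: "c \<noteq> 0" and cSp: "c \<in> span Sp"
      and orth: "\<And>y. y \<in> span D \<Longrightarrow> orthogonal c y"
      using orthogonal_to_subspace_exists_gen by blast
    have cS': "\<And>i. i \<notin> EU' \<Longrightarrow> c $ i = 0" using cSp spSp unfolding Sp_def by auto
    show ?thesis
    proof (rule that[of c "c \<bullet> q0"])
      show "\<And>i. i \<notin> EU' \<Longrightarrow> c $ i = 0" by (rule cS')
      show "c \<noteq> 0 \<or> c \<bullet> q0 \<noteq> 0" using c0 by simp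
      fix z assume z: "z \<in> F_U F U"
      have "- q0 + proj EU' z \<in> span D" unfolding D_def Q_def using z
        by (intro span_base) auto
      then have "c \<bullet> (- q0 + proj EU' z) = 0" using orth orthogonal_def by blast
      then have "c \<bullet> proj EU' z = c \<bullet> q0" by (simp add: inner_diff_right)
      moreover have "c \<bullet> proj EU' z = c \<bullet> z"
        unfolding inner_vec_def proj_def using cS' by (intro sum.cong) auto
      ultimately show "c \<bullet> z = c \<bullet> q0" by simp
    qed
  qed
  define r where "r X = c \<bullet> vx V E X - d" for X
  define q where "q z = (\<Sum>T\<in>Pow U. (-1)^card T * ((\<Sum>e\<in>EU'. c$e * mon z (e \<union> T)) - d * mon z T))"
    for z
  have q_aff: "q (u *\<^sub>R x + v *\<^sub>R y) = u * q x + v * q y" if uv: "u + v = 1" for u v x y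
  proof -
    have "q (u *\<^sub>R x + v *\<^sub>R y) = (\<Sum>T\<in>Pow U. (-1)^card T * ((\<Sum>e\<in>EU'. c$e * (u * mon x (e \<union> T) + v * mon y (e \<union> T))) - d * (u * mon x T + v * mon y T)))"
      unfolding q_def mon_aff[OF uv] ..
    also have "\<dots> = (\<Sum>T\<in>Pow U. u * ((-1)^card T * ((\<Sum>e\<in>EU'. c$e * mon x (e \<union> T)) - d * mon x T)) + v * ((-1)^card T * ((\<Sum>e\<in>EU'. c$e * mon y (e \<union> T)) - d * mon y T)))"
      by (intro sum.cong refl) (simp add: algebra_simps sum.distrib sum_distrib_left)
    also have "\<dots> = u * q x + v * q y"
      unfolding q_def by (simp add: sum.distrib sum_distrib_left)
    finally show ?thesis .
  qed
  have c_vx: "c \<bullet> vx V E X = (\<Sum>e\<in>EU'. c$e * (if e \<subseteq> X then 1 else 0))" for X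
  proof -
    have "c \<bullet> vx V E X = (\<Sum>e\<in>UNIV. c$e * vx V E X $ e)" unfolding inner_vec_def by simp
    also have "\<dots> = (\<Sum>e\<in>EU'. c$e * vx V E X $ e)"
      by (rule sum.mono_neutral_right) (use cS in auto)
    also have "\<dots> = (\<Sum>e\<in>EU'. c$e * (if e \<subseteq> X then 1 else 0))"
    proof (rule sum.cong)
      fix e assume "e \<in> EU'"
      then have "e \<in> K" using EU'K[of e "{}"] by simp
      then show "c$e * vx V E X $ e = c$e * (if e \<subseteq> X then 1 else 0)"
        unfolding vx_def K_def by simp
    qed simp
    finally show ?thesis .
  qed
  have finU: "finite U" using UV hV finite_subset by blast
  have q_vx: "q (vx V E X) = (if U \<inter> X = {} then r X else 0)" for X
  proof -
    have "q (vx V E X) = (\<Sum>T\<in>Pow U. (if T \<subseteq> X then (-1)^card T else 0) * r X)"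
      unfolding q_def
    proof (rule sum.cong[OF refl])
      fix T assume T: "T \<in> Pow U"
      have "(\<Sum>e\<in>EU'. c$e * mon (vx V E X) (e \<union> T)) =
            (\<Sum>e\<in>EU'. c$e * (if e \<subseteq> X then 1 else 0) * (if T \<subseteq> X then 1 else 0))"
      proof (rule sum.cong[OF refl])
        fix e assume "e \<in> EU'"
        then have "e \<union> T \<in> Lset V \<union> E \<union> {{}}" using EU'K T unfolding K_def by auto
        then show "c$e * mon (vx V E X) (e \<union> T) =
            c$e * (if e \<subseteq> X then 1 else 0) * (if T \<subseteq> X then 1 else 0)"
          by (simp add: vx_mon)
      qed
      moreover have "mon (vx V E X) T = (if T \<subseteq> X then 1 else 0)"
        using TK[of T] T unfolding K_def by (simp add: vx_mon)
      ultimately show "(-1)^card T * ((\<Sum>e\<in>EU'. c$e * mon (vx V E X) (e \<union> T)) - d * mon (vx V E X) T)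
          = (if T \<subseteq> X then (-1)^card T else 0) * r X"
        unfolding r_def c_vx by (cases "T \<subseteq> X") simp_all
    qed
    also have "\<dots> = (\<Sum>T\<in>Pow U. (if T \<subseteq> X then (-1)^card T else 0)) * r X"
      by (simp add: sum_distrib_right)
    also have "(\<Sum>T\<in>Pow U. (if T \<subseteq> X then (-1)^card T else 0)) = (\<Sum>T\<in>{T\<in>Pow U. T \<subseteq> X}. (-1::real)^card T)"
      using finU by (intro sum.inter_filter[symmetric]) simp
    also have "{T\<in>Pow U. T \<subseteq> X} = Pow (U \<inter> X)" by auto
    also have "(\<Sum>T\<in>Pow (U \<inter> X). (-1::real)^card T) = (if U \<inter> X = {} then 1 else 0)"
      by (rule alt_sum) (use finU in auto)
    finally show ?thesis by simp
  qed
  have convq: "convex {z. q z = 0}" unfolding convex_def using q_aff by auto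
  have affq: "affine {z. q z = 0}" unfolding affine_def using q_aff by auto
  have MV: "M \<subseteq> vx V E ` Pow V" using ml_vx[OF assms(1)] unfolding M_def by blast
  have finM: "finite M" using finite_subset[OF MV] hV by auto
  have face: "F face_of P" and Fne: "F \<noteq> {}" and adF: "aff_dim F = aff_dim P - 1"
    using assms(3) unfolding facet_of_def P_def by auto
  have faceM: "F face_of convex hull M" using face PM by simp
  obtain s' where s'M: "s' \<subseteq> M" and Fs': "F = convex hull s'"
    using face_of_convex_hull_subset[OF finite_imp_compact[OF finM] faceM] by blast
  have qF: "\<And>z. z \<in> F \<Longrightarrow> q z = 0"
  proof -
    have "\<forall>z\<in>s'. q z = 0"
    proof
      fix z assume zs: "z \<in> s'"
      then obtain X where X: "X \<subseteq> V" "z = vx V E X" using s'M MV by blast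
      show "q z = 0"
      proof (cases "U \<inter> X = {}")
        case True
        have "z \<in> F" using hull_inc[OF zs] Fs' by simp
        moreover have "\<forall>I\<in>U. z $ {I} = 0"
        proof
          fix I assume "I \<in> U"
          then have "I \<in> V" "I \<notin> X" using UV True by auto
          then show "z $ {I} = 0" using X(2) vx_coord_single[of I V E X] by simp
        qed
        ultimately have "z \<in> F_U F U" unfolding F_U_def by auto
        then have "r X = 0" using rel X unfolding r_def by auto
        then show ?thesis using q_vx X True by simp
      next
        case False
        then show ?thesis using q_vx X by simp
      qed
    qed
    then have "s' \<subseteq> {z. q z = 0}" by auto
    then have "convex hull s' \<subseteq> {z. q z = 0}" using convq by (rule hull_minimal)
    then show "\<And>z. z \<in> F \<Longrightarrow> q z = 0" using Fs' by auto
  qed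
  obtain X0 where X0: "X0 \<subseteq> V" "U \<inter> X0 = {}" "r X0 \<noteq> 0"
  proof (cases "d = 0")
    case False
    have "c \<bullet> vx V E {} = 0" unfolding c_vx using EU'sub by (intro sum.neutral) auto
    then have "r {} \<noteq> 0" using False unfolding r_def by simp
    then show ?thesis using that[of "{}"] by simp
  next
    case True
    then have "c \<noteq> 0" using cd by simp
    then obtain i where "c $ i \<noteq> 0" by (metis vec_eq_iff zero_index)
    define A where "A = {e\<in>EU'. c$e \<noteq> 0}"
    have "i \<in> A" using cS \<open>c $ i \<noteq> 0\<close> unfolding A_def by auto
    have finA: "finite A" by simp
    define m where "m = Min (card ` A)"
    have "m \<in> card ` A" unfolding m_def using finA \<open>i \<in> A\<close> by (intro Min_in) auto
    then obtain e0 where e0A: "e0 \<in> A" and ce0: "card e0 = m" by auto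
    have minc: "\<And>e. e \<in> A \<Longrightarrow> card e0 \<le> card e" unfolding ce0 m_def using finA by simp
    have "(\<Sum>e\<in>EU'. c$e * (if e \<subseteq> e0 then 1 else 0)) = (\<Sum>e\<in>EU'. if e = e0 then c$e0 else 0)"
    proof (rule sum.cong[OF refl])
      fix e assume eE: "e \<in> EU'"
      show "c$e * (if e \<subseteq> e0 then 1 else 0) = (if e = e0 then c$e0 else 0)"
      proof (cases "e \<subseteq> e0 \<and> e \<noteq> e0")
        case True
        then have "card e < card e0" by (intro psubset_card_mono) auto
        then have "e \<notin> A" using minc by force
        then show ?thesis using True eE unfolding A_def by auto
      qed auto
    qed
    also have "\<dots> = c$e0" using e0A unfolding A_def by simp
    finally have "r e0 = c$e0" unfolding r_def c_vx True by simp
    then show ?thesis using that[of e0] e0A EU'sub unfolding A_def by auto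
  qed
  define y0 where "y0 = vx V E X0"
  have y0P: "y0 \<in> P" unfolding y0_def PM M_def by (rule hull_inc) (rule vx_in[OF assms(1)])
  have qy0: "q y0 \<noteq> 0" using X0 q_vx unfolding y0_def by simp
  define G where "G = P \<inter> {z. q z = 0}"
  have FG: "F \<subseteq> G" using face_of_imp_subset[OF face] qF unfolding G_def by auto
  have "affine hull G \<subseteq> {z. q z = 0}" using affq by (intro hull_minimal) (auto simp: G_def)
  then have "y0 \<notin> affine hull G" using qy0 by auto
  moreover have "affine hull G \<subseteq> affine hull P" unfolding G_def by (intro hull_mono) auto
  moreover have "y0 \<in> affine hull P" using hull_inc[OF y0P] .
  ultimately have "affine hull G \<subset> affine hull P" by blast
  then have "aff_dim G < aff_dim P" by (rule aff_dim_psubset)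
  moreover have "aff_dim F \<le> aff_dim G" using FG by (rule aff_dim_subset)
  ultimately have "aff_dim F = aff_dim G" using adF by simp
  then have hullFG: "affine hull F = affine hull G" using aff_dim_eq_full_gen[OF FG] by simp
  obtain I0 where I0: "I0 \<in> U" using assms(5) by blast
  then have I0V: "I0 \<in> V" and "I0 \<notin> V1F V E F" using assms(4) by auto
  then obtain z1 where z1: "z1 \<in> P" "z1 $ {I0} = 1" "z1 \<notin> F"
    unfolding V1F_def P_def by auto
  define a1 where "a1 = (axis {I0} 1 :: real^('v set))"
  have a1x: "a1 \<bullet> x = x $ {I0}" for x unfolding a1_def by (simp add: inner_axis')
  have M1: "\<forall>x\<in>M. a1 \<bullet> x \<le> 1"
  proof
    fix x assume "x \<in> M"
    moreover have "{I0} \<in> Lset V \<union> E" using I0V unfolding Lset_def by auto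
    ultimately have "x $ {I0} \<in> {0,1}" unfolding M_def multilinear_set_def by blast
    then show "a1 \<bullet> x \<le> 1" unfolding a1x by auto
  qed
  have "P \<subseteq> {x. a1 \<bullet> x \<le> 1}" unfolding PM
    by (rule hull_minimal) (use M1 convex_halfspace_le in auto)
  then have face1: "(P \<inter> {x. a1 \<bullet> x = 1}) face_of P"
    by (intro face_of_Int_supporting_hyperplane_le) (auto simp: PM convex_convex_hull)
  have face1M: "(P \<inter> {x. a1 \<bullet> x = 1}) face_of convex hull M" using face1 PM by simp
  obtain s1 where s1M: "s1 \<subseteq> M" and Ps1: "P \<inter> {x. a1 \<bullet> x = 1} = convex hull s1"
    using face_of_convex_hull_subset[OF finite_imp_compact[OF finM] face1M] by blast
  have "\<forall>w\<in>s1. q w = 0"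
  proof
    fix w assume ws: "w \<in> s1"
    then obtain X where X: "X \<subseteq> V" "w = vx V E X" using s1M MV by blast
    have "w \<in> P \<inter> {x. a1 \<bullet> x = 1}" using hull_inc[OF ws] Ps1 by simp
    then have "w $ {I0} = 1" using a1x by auto
    then have "I0 \<in> X" using X vx_coord_single[OF I0V] by (auto split: if_splits)
    then have "U \<inter> X \<noteq> {}" using I0 by blast
    then show "q w = 0" using q_vx X by simp
  qed
  then have "convex hull s1 \<subseteq> {z. q z = 0}" using convq by (intro hull_minimal) auto
  moreover have "z1 \<in> P \<inter> {x. a1 \<bullet> x = 1}" using z1 a1x by auto
  ultimately have "q z1 = 0" using Ps1 by auto
  then have "z1 \<in> G" using z1 unfolding G_def by simp
  then have "z1 \<in> affine hull F" using hull_inc[of z1 G affine] hullFG by simp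
  have "polyhedron P" unfolding PM using finM by (rule polyhedron_convex_hull)
  then have "F exposed_face_of P" using face exposed_face_of_polyhedron by blast
  then obtain a b where Pab: "P \<subseteq> {x. a \<bullet> x \<le> b}" and Fab: "F = P \<inter> {x. a \<bullet> x = b}"
    unfolding exposed_face_of_def by blast
  have "affine hull F \<subseteq> {x. a \<bullet> x = b}" using Fab affine_hyperplane by (intro hull_minimal) auto
  then have "z1 \<in> F" using \<open>z1 \<in> affine hull F\<close> z1 Fab by auto
  then show False using z1 by simp
qed

end
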